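(* Let $S$ be an infinite finitely generated cancellative semigroup that is not a group. Then $|\Omega S|=1$ or $|\Omega S|\ge\aleph_0$.
   Context: $S$ is cancellative if both $ax=ay\Rightarrow x=y$ and $xa=ya\Rightarrow x=y$ for all $a,x,y\in S$. A digraph on $\Omega$ is a subset $\Gamma\subseteq\Omega\times\Omega$. A path is a sequence of pairwise distinct vertices $(v_0,v_1,\ldots)$ with $(v_i,v_{i+1})\in\Gamma$ (length 0 allowed); a ray is an infinite path; an anti-ray is an infinite sequence of distinct vertices with $(v_{i+1},v_i)\in\Gamma$. For infinite $\Sigma',\Sigma\subseteq\Omega$, $\Sigma'\preccurlyeq\Sigma$ means there are infinitely many pairwise vertex-disjoint paths from vertices of $\Sigma'$ to vertices of $\Sigma$. On rays and anti-rays $\preccurlyeq$ is a preorder with associated equivalence $\approx$; the ends are the $\approx$-classes of rays and anti-rays, and $\Omega\Gamma$ is the poset of ends. The right Cayley graph $\Gamma_r(S,A)$ has vertex set $S$ and edges $(x,xa)$, $x\in S$, $a\in A$. For finitely generated $S$, $\Omega S:=\Omega\Gamma_r(S,A)$ for any finite generating set $A$ (well defined up to isomorphism). *)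

theory Defs
  imports Main
begin

text \<open>Semigroups are modelled as types of class semigroup_mult; S is UNIV.\<close>

definition cancellative :: "('a::semigroup_mult) itself \<Rightarrow> bool" where
  "cancellative _ \<longleftrightarrow>
     (\<forall>a x y :: 'a. a * x = a * y \<longrightarrow> x = y) \<and> (\<forall>a x y :: 'a. x * a = y * a \<longrightarrow> x = y)"

definition is_group :: "('a::semigroup_mult) itself \<Rightarrow> bool" where
  "is_group _ \<longleftrightarrow>
     (\<exists>e :: 'a. (\<forall>x. e * x = x \<and> x * e = x) \<and> (\<forall>x. \<exists>y. x * y = e \<and> y * x = e))"

inductive_set gen :: "('a::semigroup_mult) set \<Rightarrow> 'a set" for A where
  base: "a \<in> A \<Longrightarrow> a \<in> gen A"
| step: "x \<in> gen A \<Longrightarrow> a \<in> A \<Longrightarrow> x * a \<in> gen A"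

definition generates :: "('a::semigroup_mult) set \<Rightarrow> bool" where
  "generates A \<longleftrightarrow> gen A = UNIV"

definition finitely_generated :: "('a::semigroup_mult) itself \<Rightarrow> bool" where
  "finitely_generated _ \<longleftrightarrow> (\<exists>A :: 'a set. finite A \<and> generates A)"

definition cayley_r :: "('a::semigroup_mult) set \<Rightarrow> ('a \<times> 'a) set" where
  "cayley_r A = {(x, x * a) | x a. a \<in> A}"

definition is_path :: "('v \<times> 'v) set \<Rightarrow> 'v list \<Rightarrow> bool" where
  "is_path G p \<longleftrightarrow> p \<noteq> [] \<and> distinct p \<and> (\<forall>i. Suc i < length p \<longrightarrow> (p ! i, p ! Suc i) \<in> G)"

definition is_ray :: "('v \<times> 'v) set \<Rightarrow> (nat \<Rightarrow> 'v) \<Rightarrow> bool" where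
  "is_ray G r \<longleftrightarrow> inj r \<and> (\<forall>i. (r i, r (Suc i)) \<in> G)"

definition is_antiray :: "('v \<times> 'v) set \<Rightarrow> (nat \<Rightarrow> 'v) \<Rightarrow> bool" where
  "is_antiray G r \<longleftrightarrow> inj r \<and> (\<forall>i. (r (Suc i), r i) \<in> G)"

definition reach_le :: "('v \<times> 'v) set \<Rightarrow> 'v set \<Rightarrow> 'v set \<Rightarrow> bool" where
  "reach_le G S' S \<longleftrightarrow>
     (\<exists>P. infinite P \<and>
          (\<forall>p\<in>P. is_path G p \<and> hd p \<in> S' \<and> last p \<in> S) \<and>
          (\<forall>p\<in>P. \<forall>q\<in>P. p \<noteq> q \<longrightarrow> set p \<inter> set q = {}))"

definition rays_antirays :: "('v \<times> 'v) set \<Rightarrow> (nat \<Rightarrow> 'v) set" where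
  "rays_antirays G = {r. is_ray G r \<or> is_antiray G r}"

definition end_equiv :: "('v \<times> 'v) set \<Rightarrow> (nat \<Rightarrow> 'v) \<Rightarrow> (nat \<Rightarrow> 'v) \<Rightarrow> bool" where
  "end_equiv G r s \<longleftrightarrow> reach_le G (range r) (range s) \<and> reach_le G (range s) (range r)"

definition ends :: "('v \<times> 'v) set \<Rightarrow> (nat \<Rightarrow> 'v) set set" where
  "ends G = (\<lambda>r. {s \<in> rays_antirays G. end_equiv G r s}) ` rays_antirays G"

end

theory Submission
  imports Defs
begin

lemma canc_l: "cancellative TYPE('a::semigroup_mult) \<Longrightarrow> (a::'a) * x = a * y \<Longrightarrow> x = y"
  unfolding cancellative_def by blast

lemma canc_r: "cancellative TYPE('a::semigroup_mult) \<Longrightarrow> x * (a::'a) = y * a \<Longrightarrow> x = y"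
  unfolding cancellative_def by blast

lemma ident:
  assumes c: "cancellative TYPE('a::semigroup_mult)" and h: "(p::'a) * t = p"
  shows "t * x = x \<and> x * t = x"
proof -
  have "p * (t * t) = p * t" by (metis h mult.assoc)
  hence tt: "t * t = t" using canc_l[OF c] by blast
  have "t * (t * x) = t * x" by (metis tt mult.assoc)
  hence 1: "t * x = x" using canc_l[OF c] by blast
  have "(x * t) * t = x * t" by (metis tt mult.assoc)
  hence 2: "x * t = x" using canc_r[OF c] by blast
  show ?thesis using 1 2 by simp
qed

primrec lt :: "'a::semigroup_mult \<Rightarrow> nat \<Rightarrow> 'a \<Rightarrow> 'a" where
  "lt v 0 x = x" | "lt v (Suc n) x = v * lt v n x"

lemma lt_mult: "lt v n x * b = lt v n (x * b)"
  by (induction n) (simp_all add: mult.assoc)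

lemma lt_add: "lt v (i + d) x = lt v i (lt v d x)"
  by (induction i) auto

lemma lt_inj: "cancellative TYPE('a::semigroup_mult) \<Longrightarrow> lt (v::'a) n x = lt v n y \<Longrightarrow> x = y"
  by (induction n) (auto dest: canc_l)

lemma lt_comm: "lt v n (v * x) = v * lt v n x"
  by (induction n) auto

lemma edge_iff: "(x, y) \<in> cayley_r A \<longleftrightarrow> (\<exists>b\<in>A. y = x * b)"
  unfolding cayley_r_def by auto

lemma RA_inj: "r \<in> rays_antirays G \<Longrightarrow> inj r"
  unfolding rays_antirays_def is_ray_def is_antiray_def by auto

lemma transl_RA:
  assumes c: "cancellative TYPE('a::semigroup_mult)" and r: "r \<in> rays_antirays (cayley_r (A::'a set))"
  shows "(\<lambda>k. (v::'a) * r k) \<in> rays_antirays (cayley_r A)"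
proof -
  have inj: "inj (\<lambda>k. v * r k)"
    using RA_inj[OF r] canc_l[OF c] unfolding inj_def by blast
  have e: "(v * x, v * y) \<in> cayley_r A" if "(x, y) \<in> cayley_r A" for x y
    using that unfolding edge_iff by (auto simp: mult.assoc)
  show ?thesis using r inj e unfolding rays_antirays_def is_ray_def is_antiray_def by blast
qed

lemma ltRA:
  assumes c: "cancellative TYPE('a::semigroup_mult)" and r: "r \<in> rays_antirays (cayley_r (A::'a set))"
  shows "(\<lambda>k. lt (v::'a) n (r k)) \<in> rays_antirays (cayley_r A)"
proof (induction n)
  case 0 then show ?case using r by simp
next
  case (Suc n) then show ?case using transl_RA[OF c Suc, of v] by simp
qed

lemma path_closed:
  assumes p: "is_path G p" and h: "hd p \<in> X" and cl: "\<And>x y. x \<in> X \<Longrightarrow> (x,y) \<in> G \<Longrightarrow> y \<in> X"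
  shows "\<forall>i<length p. p ! i \<in> X"
proof (intro allI impI)
  fix i assume "i < length p"
  then show "p ! i \<in> X"
  proof (induction i)
    case 0 then show ?case using h p by (simp add: is_path_def hd_conv_nth)
  next
    case (Suc i)
    then have "p ! i \<in> X" by simp
    moreover have "(p ! i, p ! Suc i) \<in> G" using p Suc.prems unfolding is_path_def by blast
    ultimately show ?case by (rule cl)
  qed
qed

lemma last_closed:
  assumes p: "is_path G p" and h: "hd p \<in> X" and cl: "\<And>x y. x \<in> X \<Longrightarrow> (x,y) \<in> G \<Longrightarrow> y \<in> X"
  shows "last p \<in> X"
proof -
  have "p \<noteq> []" using p by (simp add: is_path_def)
  then show ?thesis using path_closed[OF p h cl] by (simp add: last_conv_nth)
qed

lemma single_path: "is_path G [x]"
  by (simp add: is_path_def)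

lemma inj_range_infinite: "inj (f::nat \<Rightarrow> 'b) \<Longrightarrow> infinite (range f)"
proof
  assume "inj f" "finite (range f)"
  then have "finite (UNIV::nat set)" using finite_imageD by blast
  then show False by simp
qed

lemma reach_refl:
  fixes u :: "nat \<Rightarrow> 'v"
  assumes "inj u" shows "reach_le G (range u) (range u)"
  unfolding reach_le_def
proof (intro exI[of _ "(\<lambda>k. [u k]) ` UNIV"] conjI)
  have "inj (\<lambda>k. [u k])" using assms unfolding inj_def by simp
  then show "infinite (range (\<lambda>k. [u k]))" by (simp add: inj_range_infinite)
  show "\<forall>p\<in>range (\<lambda>k. [u k]). is_path G p \<and> hd p \<in> range u \<and> last p \<in> range u"
    by (simp add: single_path)
  show "\<forall>p\<in>range (\<lambda>k. [u k]). \<forall>q\<in>range (\<lambda>k. [u k]). p \<noteq> q \<longrightarrow> set p \<inter> set q = {}"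
    by (simp add: disjoint_iff)
qed

lemma P:
  assumes c: "cancellative TYPE('a::semigroup_mult)"
    and fin: "finite (ends (cayley_r (A::'a set)))"
    and r: "r \<in> rays_antirays (cayley_r A)"
  shows "\<exists>k y. r k = (v::'a) * y"
proof -
  let ?G = "cayley_r A"
  define T where "T n = (\<lambda>k. lt v n (r k))" for n
  have TRA: "T n \<in> rays_antirays ?G" for n unfolding T_def using ltRA[OF c r] .
  define f where "f n = {s \<in> rays_antirays ?G. end_equiv ?G (T n) s}" for n
  have "range f \<subseteq> ends ?G" unfolding ends_def f_def using TRA by auto
  have "\<not> inj f"
  proof
    assume "inj f"
    then have "finite (UNIV::nat set)"
      using inj_on_finite[of f UNIV "ends ?G"] \<open>range f \<subseteq> ends ?G\<close> fin by blast
    then show False by simp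
  qed
  then obtain i0 j0 where ij0: "i0 \<noteq> j0" "f i0 = f j0" unfolding inj_def by auto
  obtain i j where ij: "i < j" "f i = f j"
  proof (cases "i0 < j0")
    case True then show ?thesis using that ij0 by blast
  next
    case False then have "j0 < i0" using ij0(1) by simp
    then show ?thesis using that ij0(2) by simp
  qed
  have "end_equiv ?G (T j) (T j)"
    unfolding end_equiv_def using reach_refl[OF RA_inj[OF TRA]] by blast
  hence "T j \<in> f j" unfolding f_def using TRA by blast
  hence "T j \<in> f i" using ij by simp
  hence "end_equiv ?G (T i) (T j)" unfolding f_def by blast
  hence "reach_le ?G (range (T j)) (range (T i))" unfolding end_equiv_def by blast
  then obtain PS where PS: "infinite PS" "\<forall>p\<in>PS. is_path ?G p \<and> hd p \<in> range (T j) \<and> last p \<in> range (T i)"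
    unfolding reach_le_def by blast
  have "PS \<noteq> {}" using PS(1) by auto
  then obtain p where "p \<in> PS" by blast
  with PS have p: "is_path ?G p" "hd p \<in> range (T j)" "last p \<in> range (T i)" by auto
  have h: "hd p \<in> range (lt v j)" using p(2) unfolding T_def by auto
  have cl: "y \<in> range (lt v j)" if xX: "x \<in> range (lt v j)" and xy: "(x, y) \<in> ?G" for x y
  proof -
    obtain z where z: "x = lt v j z" using xX by auto
    obtain b where "y = x * b" using xy edge_iff by blast
    then have "y = lt v j (z * b)" using z lt_mult by metis
    then show ?thesis by auto
  qed
  have "last p \<in> range (lt v j)" using last_closed[OF p(1) h cl] .
  then obtain w where w: "last p = lt v j w" by auto
  obtain k where k: "last p = lt v i (r k)" using p(3) unfolding T_def by auto
  define m where "m = j - i - 1"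
  have m: "j = i + Suc m" using ij(1) unfolding m_def by simp
  have "lt v j w = lt v i (lt v (Suc m) w)" unfolding m by (rule lt_add)
  moreover from k w have "lt v i (r k) = lt v j w" by metis
  ultimately have "lt v i (r k) = lt v i (lt v (Suc m) w)" by simp
  hence "r k = lt v (Suc m) w" by (rule lt_inj[OF c])
  hence "r k = v * lt v m w" by simp
  then show ?thesis by blast
qed

lemma lt_surj: "lt a m a * z = z \<Longrightarrow> \<exists>y. a * y = z"
proof (cases m)
  case 0 then show "lt a m a * z = z \<Longrightarrow> \<exists>y. a * y = z" by auto
next
  case (Suc m') then show "lt a m a * z = z \<Longrightarrow> \<exists>y. a * y = z"
    by (auto simp: mult.assoc)
qed

lemma R_ray:
  assumes c: "cancellative TYPE('a::semigroup_mult)" and aA: "(a::'a) \<in> A"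
    and ns: "\<forall>y. a * y \<noteq> z0"
  shows "(\<lambda>n. lt a n a) \<in> rays_antirays (cayley_r A)"
proof -
  have key: False if "i < j" "lt a i a = lt a j a" for i j
  proof -
    define m where "m = j - i - 1"
    have m: "j = i + Suc m" using that(1) unfolding m_def by simp
    have "lt a j a = lt a i (lt a (Suc m) a)" unfolding m by (rule lt_add)
    hence "lt a i a = lt a i (lt a (Suc m) a)" using that(2) by simp
    hence "a = lt a (Suc m) a" by (rule lt_inj[OF c])
    hence "a = a * lt a m a" by simp
    hence "a * lt a m a = a" by simp
    hence "lt a m a * z0 = z0" using ident[OF c] by blast
    then show False using lt_surj ns by blast
  qed
  have inj: "inj (\<lambda>n. lt a n a)"
  proof (rule injI, rule ccontr)
    fix i j assume h: "lt a i a = lt a j a" "i \<noteq> j"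
    show False
    proof (cases "i < j")
      case True then show False using key h(1) by blast
    next
      case False then have "j < i" using h(2) by simp
      then show False using key h(1) by metis
    qed
  qed
  have "(lt a n a, lt a (Suc n) a) \<in> cayley_r A" for n
  proof -
    have "lt a (Suc n) a = lt a n a * a" by (simp add: lt_mult lt_comm)
    then show ?thesis using aA edge_iff by blast
  qed
  then show ?thesis using inj unfolding rays_antirays_def is_ray_def by blast
qed

lemma walk:
  assumes "y \<in> gen A"
  shows "\<exists>p. is_path (cayley_r A) p \<and> hd p = x \<and> last p = x * y \<and>
             (\<forall>z\<in>set p. z = x \<or> (\<exists>w. z = x * w))"
  using assms
proof (induction rule: gen.induct)
  case (base b)
  show ?case
  proof (cases "x * b = x")
    case True then show ?thesis by (intro exI[of _ "[x]"]) (auto simp: is_path_def)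
  next
    case False
    have "is_path (cayley_r A) [x, x * b]"
      unfolding is_path_def using False base edge_iff
      by (auto simp: nth_Cons split: nat.splits)
    then show ?thesis using False by (intro exI[of _ "[x, x*b]"]) auto
  qed
next
  case (step y b)
  then obtain p where p: "is_path (cayley_r A) p" "hd p = x" "last p = x * y"
    "\<forall>z\<in>set p. z = x \<or> (\<exists>w. z = x * w)" by blast
  have pne: "p \<noteq> []" using p(1) by (simp add: is_path_def)
  let ?z = "x * (y * b)"
  show ?case
  proof (cases "?z \<in> set p")
    case True
    then obtain k where k: "k < length p" "p ! k = ?z" by (auto simp: in_set_conv_nth)
    have "is_path (cayley_r A) (take (Suc k) p)"
      using p(1) k pne unfolding is_path_def by auto
    moreover have "hd (take (Suc k) p) = x" using p(2) by simp
    moreover have "last (take (Suc k) p) = ?z"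
    proof -
      have "take (Suc k) p \<noteq> []" using pne by simp
      moreover have "length (take (Suc k) p) = Suc k" using k by simp
      ultimately show ?thesis using k by (simp add: last_conv_nth)
    qed
    moreover have "\<forall>z\<in>set (take (Suc k) p). z = x \<or> (\<exists>w. z = x * w)"
      using p(4) set_take_subset[of "Suc k" p] by blast
    ultimately show ?thesis by blast
  next
    case False
    have "?z = last p * b" using p(3) by (simp add: mult.assoc)
    hence e: "(last p, ?z) \<in> cayley_r A" unfolding edge_iff using step(2) by blast
    have "is_path (cayley_r A) (p @ [?z])"
      unfolding is_path_def
    proof (intro conjI allI impI)
      show "p @ [?z] \<noteq> []" by simp
      show "distinct (p @ [?z])" using False p(1) by (simp add: is_path_def)
      fix i assume i: "Suc i < length (p @ [?z])"
      show "((p @ [?z]) ! i, (p @ [?z]) ! Suc i) \<in> cayley_r A"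
      proof (cases "Suc i < length p")
        case True then show ?thesis using p(1) by (simp add: nth_append is_path_def)
      next
        case False
        then have "i = length p - 1" using i by simp
        then show ?thesis using e pne False by (simp add: nth_append last_conv_nth)
      qed
    qed
    moreover have "hd (p @ [?z]) = x" using p(2) pne by simp
    moreover have "last (p @ [?z]) = x * (y * b)" by simp
    moreover have "\<forall>z\<in>set (p @ [?z]). z = x \<or> (\<exists>w. z = x * w)" using p(4) by auto
    ultimately show ?thesis by blast
  qed
qed

lemma disjoint_family:
  assumes ex: "\<And>U. finite U \<Longrightarrow> \<exists>p. Q p \<and> p \<noteq> [] \<and> set p \<inter> U = {}"
  shows "\<exists>P. infinite P \<and> (\<forall>p\<in>P. Q p) \<and> (\<forall>p\<in>P. \<forall>q\<in>P. p \<noteq> q \<longrightarrow> set p \<inter> set q = {})"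
proof -
  define ch where "ch U = (SOME p. Q p \<and> p \<noteq> [] \<and> set p \<inter> U = {})" for U
  define used where "used = rec_nat {} (\<lambda>n U. U \<union> set (ch U))"
  have used0: "used 0 = {}" and usedS: "used (Suc n) = used n \<union> set (ch (used n))" for n
    unfolding used_def by auto
  have fin: "finite (used n)" for n by (induction n) (auto simp: used0 usedS)
  define pth where "pth n = ch (used n)" for n
  have good: "Q (pth n) \<and> pth n \<noteq> [] \<and> set (pth n) \<inter> used n = {}" for n
    unfolding pth_def ch_def using someI_ex[OF ex[OF fin]] .
  have mono: "m < n \<Longrightarrow> set (pth m) \<subseteq> used n" for m n
    by (induction n) (auto simp: usedS pth_def less_Suc_eq)
  have disj: "set (pth m) \<inter> set (pth n) = {}" if "m \<noteq> n" for m n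
  proof (cases "m < n")
    case True then show ?thesis using mono[OF True] good[of n] by blast
  next
    case False then have "n < m" using that by simp
    then show ?thesis using mono good[of m] by blast
  qed
  have inj: "inj pth"
  proof (rule injI, rule ccontr)
    fix m n assume "pth m = pth n" "m \<noteq> n"
    then show False using disj[of m n] good[of m] by auto
  qed
  show ?thesis
  proof (intro exI[of _ "range pth"] conjI)
    show "infinite (range pth)" using inj finite_imageD infinite_UNIV_nat by blast
    show "\<forall>p\<in>range pth. Q p" using good by auto
    show "\<forall>p\<in>range pth. \<forall>q\<in>range pth. p \<noteq> q \<longrightarrow> set p \<inter> set q = {}"
    proof (intro ballI impI)
      fix p q assume "p \<in> range pth" "q \<in> range pth" "p \<noteq> q"
      then obtain m n where "p = pth m" "q = pth n" "m \<noteq> n" by auto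
      then show "set p \<inter> set q = {}" using disj by simp
    qed
  qed
qed

lemma depth:
  assumes c: "cancellative TYPE('a::semigroup_mult)"
    and fin: "finite (ends (cayley_r (A::'a set)))"
    and aA: "(a::'a) \<in> A" and ns: "\<forall>y. a * y \<noteq> z0"
  shows "\<exists>n. cc \<notin> range (lt a n)"
proof (rule ccontr)
  assume "\<not> ?thesis"
  hence all: "cc \<in> range (lt a n)" for n by blast
  obtain k y where k: "lt a k a = cc * y" using P[OF c fin R_ray[OF c aA ns], of cc] by blast
  obtain w where w: "cc = lt a (k + 2) w" using all by blast
  have "cc * y = lt a (k + 2) (w * y)" unfolding w by (rule lt_mult)
  also have "\<dots> = lt a k (lt a 2 (w * y))" by (rule lt_add)
  finally have "lt a k a = lt a k (lt a 2 (w * y))" using k by simp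
  hence "a = a * (a * (w * y))" using lt_inj[OF c] by (simp add: numeral_2_eq_2)
  hence "a * (a * (w * y)) = a" by simp
  hence "(a * (w * y)) * z0 = z0" using ident[OF c] by blast
  hence "a * ((w * y) * z0) = z0" by (simp add: mult.assoc)
  then show False using ns by blast
qed

lemma all_reach:
  assumes c: "cancellative TYPE('a::semigroup_mult)"
    and fin: "finite (ends (cayley_r (A::'a set)))"
    and aA: "(a::'a) \<in> A" and ns: "\<forall>y. a * y \<noteq> z0"
    and g: "generates A"
    and r: "r \<in> rays_antirays (cayley_r A)" and r': "r' \<in> rays_antirays (cayley_r A)"
  shows "reach_le (cayley_r A) (range r) (range r')"
proof -
  let ?G = "cayley_r A"
  have "\<exists>p. (is_path ?G p \<and> hd p \<in> range r \<and> last p \<in> range r') \<and> p \<noteq> [] \<and> set p \<inter> U = {}"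
    if U: "finite U" for U
  proof -
    define nf where "nf u = (SOME n. u \<notin> range (lt a n))" for u
    have nf: "u \<notin> range (lt a (nf u))" for u
      unfolding nf_def using someI_ex[OF depth[OF c fin aA ns]] .
    define N where "N = Max (insert 0 (nf ` U))"
    have le: "nf u \<le> N" if "u \<in> U" for u unfolding N_def using U that by simp
    have out: "u \<notin> range (lt a N)" if "u \<in> U" for u
    proof
      assume "u \<in> range (lt a N)"
      then obtain x where "u = lt a N x" by auto
      hence "u = lt a (nf u) (lt a (N - nf u) x)" using le[OF that] lt_add[of a "nf u" "N - nf u" x]
        by simp
      then show False using nf[of u] by auto
    qed
    obtain i y where i: "r i = lt a N a * y" using P[OF c fin r] by blast
    hence i': "r i = lt a N (a * y)" by (simp add: lt_mult)
    obtain j y' where j: "r' j = r i * y'" using P[OF c fin r'] by blast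
    have "y' \<in> gen A" using g unfolding generates_def by simp
    then obtain p where p: "is_path ?G p" "hd p = r i" "last p = r i * y'"
      "\<forall>z\<in>set p. z = r i \<or> (\<exists>w. z = r i * w)" using walk by blast
    have "set p \<subseteq> range (lt a N)"
    proof
      fix z assume "z \<in> set p"
      then have "z = r i \<or> (\<exists>w. z = r i * w)" using p(4) by blast
      then show "z \<in> range (lt a N)"
      proof
        assume "z = r i" then show ?thesis using i' by simp
      next
        assume "\<exists>w. z = r i * w"
        then obtain w where "z = r i * w" by blast
        then have "z = lt a N (a * y * w)" using i' lt_mult by simp
        then show ?thesis by simp
      qed
    qed
    hence "set p \<inter> U = {}" using out by blast
    moreover have "p \<noteq> []" using p(1) by (simp add: is_path_def)
    moreover have "hd p \<in> range r" using p(2) by simp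
    moreover have "last p = r' j" using p(3) j by simp
    hence "last p \<in> range r'" by simp
    ultimately show ?thesis using p(1) by blast
  qed
  note D = disjoint_family[where Q="\<lambda>p. is_path ?G p \<and> hd p \<in> range r \<and> last p \<in> range r'", OF this]
  show ?thesis unfolding reach_le_def using D by simp
qed

lemma gen_ne: "x \<in> gen A \<Longrightarrow> A \<noteq> {}"
  by (induction rule: gen.induct) auto

lemma nongroup:
  assumes c: "cancellative TYPE('a::semigroup_mult)" and ng: "\<not> is_group TYPE('a)"
    and g: "generates (A::'a set)"
  shows "\<exists>a\<in>A. \<exists>z. \<forall>y. a * y \<noteq> z"
proof (rule ccontr)
  assume H0: "\<not> (\<exists>a\<in>A. \<exists>z. \<forall>y. a * y \<noteq> z)"
  have H: "\<exists>y. a * y = z" if "a \<in> A" for a z using H0 that by auto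
  have "A \<noteq> {}" using g gen_ne unfolding generates_def by blast
  then obtain a0 where "a0 \<in> A" by blast
  then obtain e where "a0 * e = a0" using H by blast
  hence e: "e * x = x \<and> x * e = x" for x using ident[OF c] by blast
  have inv: "\<exists>y. x * y = e \<and> y * x = e" if "x \<in> gen A" for x
    using that
  proof (induction rule: gen.induct)
    case (base b)
    obtain y where y: "b * y = e" using H[OF base] by blast
    have "b * (y * b) = (b * y) * b" by (simp add: mult.assoc)
    also have "\<dots> = b * e" using y e by simp
    finally have "b * (y * b) = b * e" .
    hence "y * b = e" using canc_l[OF c] by blast
    then show ?case using y by blast
  next
    case (step x b)
    obtain xi where xi: "x * xi = e" "xi * x = e" using step by blast
    obtain bi where bi0: "b * bi = e" using H[OF step(2)] by blast
    have "b * (bi * b) = (b * bi) * b" by (simp add: mult.assoc)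
    also have "\<dots> = b * e" using bi0 e by simp
    finally have "b * (bi * b) = b * e" .
    hence bi1: "bi * b = e" using canc_l[OF c] by blast
    have "(x * b) * (bi * xi) = x * ((b * bi) * xi)" by (simp add: mult.assoc)
    hence "(x * b) * (bi * xi) = e" using xi bi0 e by simp
    moreover have "(bi * xi) * (x * b) = bi * ((xi * x) * b)" by (simp add: mult.assoc)
    hence "(bi * xi) * (x * b) = e" using xi bi1 e by simp
    ultimately show ?case by blast
  qed
  have "is_group TYPE('a)"
    unfolding is_group_def using e inv g unfolding generates_def by blast
  then show False using ng by blast
qed

theorem mainTheorem13:
  fixes A :: "('a::semigroup_mult) set"
  assumes "infinite (UNIV :: 'a set)"
    and "cancellative TYPE('a)"
    and "\<not> is_group TYPE('a)"
    and "finite A" and "generates A"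
  shows "card (ends (cayley_r A)) = 1 \<or> infinite (ends (cayley_r A))"
proof (cases "finite (ends (cayley_r A))")
  case False then show ?thesis by blast
next
  case fin: True
  let ?G = "cayley_r A"
  obtain a z0 where aA: "a \<in> A" and ns: "\<forall>y. a * y \<noteq> z0"
    using nongroup[OF assms(2,3,5)] by blast
  have ne: "rays_antirays ?G \<noteq> {}" using R_ray[OF assms(2) aA ns] by blast
  have cls: "{s \<in> rays_antirays ?G. end_equiv ?G r s} = rays_antirays ?G"
    if "r \<in> rays_antirays ?G" for r
    using all_reach[OF assms(2) fin aA ns assms(5)] that unfolding end_equiv_def by blast
  have "ends ?G = {rays_antirays ?G}"
    unfolding ends_def using cls ne by auto
  then show ?thesis by simp
qed

end
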